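(* Let $\Gamma$ be a strict two-player normal-form game whose preference graph has no sink (no node of out-degree $0$) and no directed cycle of length $4$. Then each player has at least $3$ strategies. Moreover, if both players have exactly $3$ strategies, then the preference graph of $\Gamma$ is isomorphic (as a directed graph; equivalently, equal up to renaming strategies and players) to Shapley's graph. In particular, Shapley's graph is the unique smallest two-player preference graph with neither a sink nor a $4$-cycle.
   Context: A finite normal-form game has players $1,\dots,N$, finite strategy sets $S_1,\dots,S_N$ and utilities $u_i:\prod_j S_j\to\mathbb{R}$. A strategy profile is an element of $Z=\prod_j S_j$; write $(s;p_{-i})$ for the profile obtained from $p$ by replacing player $i$'s strategy with $s$. Two distinct profiles are $i$-comparable if they differ only in the strategy of player $i$. The preference graph has node set $Z$ and, for each pair of $i$-comparable profiles $p,q$, an arc $p\to q$ whenever $u_i(q)\ge u_i(p)$ (so ties produce arcs in both directions). A game is strict if $u_i(p)\neq u_i(q)$ for every player $i$ and every pair of $i$-comparable profiles $p,q$. Shapley's graph is the preference graph of the $3\times 3$ game with rows $r_1,r_2,r_3$ (player 1) and columns $c_1,c_2,c_3$ (player 2) and payoff pairs $(u_1,u_2)$: row $r_1$: $(0,0),(2,1),(1,2)$; row $r_2$: $(1,2),(0,0),(2,1)$; row $r_3$: $(2,1),(1,2),(0,0)$. Explicitly, player 1's preferences are $r_3>r_2>r_1$ against $c_1$, $r_1>r_3>r_2$ against $c_2$, $r_2>r_1>r_3$ against $c_3$; player 2's preferences are $c_3>c_2>c_1$ against $r_1$, $c_1>c_3>c_2$ against $r_2$, $c_2>c_1>c_3$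 against $r_3$ (an arc points to the more preferred profile). *)

theory Defs
  imports Complex_Main
begin

definition two_player_game ::
  "'a set \<Rightarrow> 'b set \<Rightarrow> ('a \<times> 'b \<Rightarrow> real) \<Rightarrow> ('a \<times> 'b \<Rightarrow> real) \<Rightarrow> bool" where
  "two_player_game S1 S2 u1 u2 \<longleftrightarrow> finite S1 \<and> finite S2 \<and> S1 \<noteq> {} \<and> S2 \<noteq> {}"

definition comparable1 :: "'a \<times> 'b \<Rightarrow> 'a \<times> 'b \<Rightarrow> bool" where
  "comparable1 p q \<longleftrightarrow> fst p \<noteq> fst q \<and> snd p = snd q"

definition comparable2 :: "'a \<times> 'b \<Rightarrow> 'a \<times> 'b \<Rightarrow> bool" where
  "comparable2 p q \<longleftrightarrow> fst p = fst q \<and> snd p \<noteq> snd q"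

definition pref_arc ::
  "'a set \<Rightarrow> 'b set \<Rightarrow> ('a \<times> 'b \<Rightarrow> real) \<Rightarrow> ('a \<times> 'b \<Rightarrow> real) \<Rightarrow> 'a \<times> 'b \<Rightarrow> 'a \<times> 'b \<Rightarrow> bool" where
  "pref_arc S1 S2 u1 u2 p q \<longleftrightarrow> p \<in> S1 \<times> S2 \<and> q \<in> S1 \<times> S2 \<and>
     ((comparable1 p q \<and> u1 q \<ge> u1 p) \<or> (comparable2 p q \<and> u2 q \<ge> u2 p))"

definition strict_game ::
  "'a set \<Rightarrow> 'b set \<Rightarrow> ('a \<times> 'b \<Rightarrow> real) \<Rightarrow> ('a \<times> 'b \<Rightarrow> real) \<Rightarrow> bool" where
  "strict_game S1 S2 u1 u2 \<longleftrightarrow> (\<forall>p\<in>S1 \<times> S2. \<forall>q\<in>S1 \<times> S2.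
     (comparable1 p q \<longrightarrow> u1 p \<noteq> u1 q) \<and> (comparable2 p q \<longrightarrow> u2 p \<noteq> u2 q))"

definition has_sink :: "'v set \<Rightarrow> ('v \<Rightarrow> 'v \<Rightarrow> bool) \<Rightarrow> bool" where
  "has_sink V E \<longleftrightarrow> (\<exists>p\<in>V. \<not> (\<exists>q\<in>V. E p q))"

definition has_4_cycle :: "'v set \<Rightarrow> ('v \<Rightarrow> 'v \<Rightarrow> bool) \<Rightarrow> bool" where
  "has_4_cycle V E \<longleftrightarrow> (\<exists>a\<in>V. \<exists>b\<in>V. \<exists>c\<in>V. \<exists>d\<in>V. distinct [a, b, c, d] \<and>
      E a b \<and> E b c \<and> E c d \<and> E d a)"

definition digraph_iso ::
  "'v set \<Rightarrow> ('v \<Rightarrow> 'v \<Rightarrow> bool) \<Rightarrow> 'w set \<Rightarrow> ('w \<Rightarrow> 'w \<Rightarrow> bool) \<Rightarrow> bool" where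
  "digraph_iso V E W F \<longleftrightarrow> (\<exists>f. bij_betw f V W \<and> (\<forall>p\<in>V. \<forall>q\<in>V. E p q \<longleftrightarrow> F (f p) (f q)))"

text \<open>Shapley's game: rows r1,r2,r3 = 0,1,2 and columns c1,c2,c3 = 0,1,2.\<close>
definition shapley_S :: "nat set" where
  "shapley_S = {0, 1, 2}"

definition shapley_u1 :: "nat \<times> nat \<Rightarrow> real" where
  "shapley_u1 p = [[0, 2, 1], [1, 0, 2], [2, 1, 0]] ! fst p ! snd p"

definition shapley_u2 :: "nat \<times> nat \<Rightarrow> real" where
  "shapley_u2 p = [[0, 1, 2], [2, 0, 1], [1, 2, 0]] ! fst p ! snd p"

definition shapley_arc :: "nat \<times> nat \<Rightarrow> nat \<times> nat \<Rightarrow> bool" where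
  "shapley_arc = pref_arc shapley_S shapley_S shapley_u1 shapley_u2"

end

theory Submission
  imports Defs
begin

lemma fin_argmax:
  fixes f :: "'x \<Rightarrow> real"
  assumes "finite A" "A \<noteq> {}"
  shows "\<exists>x\<in>A. \<forall>y\<in>A. f y \<le> f x"
proof -
  have "Max (f ` A) \<in> f ` A" using assms by simp
  then obtain x where x: "x \<in> A" "f x = Max (f ` A)" by auto
  have "\<forall>y\<in>A. f y \<le> f x" using assms x by simp
  with x show ?thesis by blast
qed

locale G =
  fixes S1 :: "'a set" and S2 :: "'b set" and u1 u2 :: "'a \<times> 'b \<Rightarrow> real"
  assumes fin1: "finite S1" and fin2: "finite S2" and ne1: "S1 \<noteq> {}" and ne2: "S2 \<noteq> {}"
    and strict1: "\<And>a a' c. a \<in> S1 \<Longrightarrow> a' \<in> S1 \<Longrightarrow> a \<noteq> a' \<Longrightarrow> c \<in> S2 \<Longrightarrow> u1 (a,c) \<noteq> u1 (a',c)"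
    and strict2: "\<And>a c c'. a \<in> S1 \<Longrightarrow> c \<in> S2 \<Longrightarrow> c' \<in> S2 \<Longrightarrow> c \<noteq> c' \<Longrightarrow> u2 (a,c) \<noteq> u2 (a,c')"
    and nosink: "\<And>a c. a \<in> S1 \<Longrightarrow> c \<in> S2 \<Longrightarrow>
        (\<exists>a'\<in>S1. a' \<noteq> a \<and> u1 (a,c) < u1 (a',c)) \<or> (\<exists>c'\<in>S2. c' \<noteq> c \<and> u2 (a,c) < u2 (a,c'))"
    and no4: "\<And>a a' c c'. a \<in> S1 \<Longrightarrow> a' \<in> S1 \<Longrightarrow> a \<noteq> a' \<Longrightarrow> c \<in> S2 \<Longrightarrow> c' \<in> S2 \<Longrightarrow> c \<noteq> c' \<Longrightarrow>
        u1 (a,c) < u1 (a',c) \<Longrightarrow> u2 (a',c) < u2 (a',c') \<Longrightarrow> u1 (a',c') < u1 (a,c') \<Longrightarrow> u2 (a,c') < u2 (a,c) \<Longrightarrow> False"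
begin

lemma br2: assumes "a \<in> S1" obtains c where "c \<in> S2" "\<And>x. x \<in> S2 \<Longrightarrow> x \<noteq> c \<Longrightarrow> u2 (a,x) < u2 (a,c)"
proof -
  obtain c where c: "c \<in> S2" "\<forall>y\<in>S2. u2 (a,y) \<le> u2 (a,c)"
    using fin_argmax[OF fin2 ne2, of "\<lambda>x. u2 (a,x)"] by blast
  have "\<And>x. x \<in> S2 \<Longrightarrow> x \<noteq> c \<Longrightarrow> u2 (a,x) < u2 (a,c)"
    using c strict2[OF assms] by (meson order_le_less)
  with c that show ?thesis by blast
qed

lemma br1: assumes "c \<in> S2" obtains a where "a \<in> S1" "\<And>x. x \<in> S1 \<Longrightarrow> x \<noteq> a \<Longrightarrow> u1 (x,c) < u1 (a,c)"
proof -
  obtain a where a: "a \<in> S1" "\<forall>y\<in>S1. u1 (y,c) \<le> u1 (a,c)"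
    using fin_argmax[OF fin1 ne1, of "\<lambda>x. u1 (x,c)"] by blast
  have "\<And>x. x \<in> S1 \<Longrightarrow> x \<noteq> a \<Longrightarrow> u1 (x,c) < u1 (a,c)"
    using a strict1[OF _ a(1) _ assms] by (meson order_le_less)
  with a that show ?thesis by blast
qed

lemma card1_ge3: "card S1 \<ge> 3"
proof (rule ccontr)
  assume "\<not> card S1 \<ge> 3"
  moreover have "card S1 \<noteq> 0" using fin1 ne1 by simp
  ultimately have "card S1 = 1 \<or> card S1 = 2" by linarith
  then show False
  proof
    assume "card S1 = 1"
    then obtain a where S: "S1 = {a}" by (auto simp: card_1_singleton_iff)
    obtain c where c: "c \<in> S2" "\<And>x. x \<in> S2 \<Longrightarrow> x \<noteq> c \<Longrightarrow> u2 (a,x) < u2 (a,c)"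
      using br2[of a] S by auto
    show False using nosink[of a c] S c by force
  next
    assume "card S1 = 2"
    then obtain a b where S: "S1 = {a,b}" "a \<noteq> b" by (auto simp: card_2_iff)
    obtain c where c: "c \<in> S2" "\<And>x. x \<in> S2 \<Longrightarrow> x \<noteq> c \<Longrightarrow> u2 (a,x) < u2 (a,c)"
      using br2[of a] S by auto
    obtain d where d: "d \<in> S2" "\<And>x. x \<in> S2 \<Longrightarrow> x \<noteq> d \<Longrightarrow> u2 (b,x) < u2 (b,d)"
      using br2[of b] S by auto
    have 1: "u1 (a,c) < u1 (b,c)" using nosink[of a c] S c by force
    have 2: "u1 (b,d) < u1 (a,d)" using nosink[of b d] S d by force
    have "c \<noteq> d" using 1 2 by auto
    then show False using no4[of a b c d] 1 2 c d S by auto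
  qed
qed

lemma three:
  assumes c1: "card S1 = 3" and c2: "card S2 = 3"
  shows "\<exists>a0 a1 a2 b0 b1 b2. S1 = {a0,a1,a2} \<and> S2 = {b0,b1,b2} \<and> distinct [a0,a1,a2] \<and> distinct [b0,b1,b2] \<and>
     u1 (a0,b0) < u1 (a1,b0) \<and> u1 (a1,b0) < u1 (a2,b0) \<and> u1 (a0,b0) < u1 (a2,b0) \<and>
     u1 (a1,b1) < u1 (a2,b1) \<and> u1 (a2,b1) < u1 (a0,b1) \<and> u1 (a1,b1) < u1 (a0,b1) \<and>
     u1 (a2,b2) < u1 (a0,b2) \<and> u1 (a0,b2) < u1 (a1,b2) \<and> u1 (a2,b2) < u1 (a1,b2) \<and>
     u2 (a0,b0) < u2 (a0,b1) \<and> u2 (a0,b1) < u2 (a0,b2) \<and> u2 (a0,b0) < u2 (a0,b2) \<and>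
     u2 (a1,b1) < u2 (a1,b2) \<and> u2 (a1,b2) < u2 (a1,b0) \<and> u2 (a1,b1) < u2 (a1,b0) \<and>
     u2 (a2,b2) < u2 (a2,b0) \<and> u2 (a2,b0) < u2 (a2,b1) \<and> u2 (a2,b2) < u2 (a2,b1)"
proof -
  obtain a0 where a0: "a0 \<in> S1" using ne1 by auto
  obtain b2 where b2: "b2 \<in> S2" "\<And>x. x \<in> S2 \<Longrightarrow> x \<noteq> b2 \<Longrightarrow> u2 (a0,x) < u2 (a0,b2)"
    using br2[OF a0] by blast
  obtain a1 where a1: "a1 \<in> S1" "\<And>x. x \<in> S1 \<Longrightarrow> x \<noteq> a1 \<Longrightarrow> u1 (x,b2) < u1 (a1,b2)"
    using br1[OF b2(1)] by blast
  have a10: "a1 \<noteq> a0" using nosink[of a0 b2] a0 b2 a1 by force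
  obtain b0 where b0: "b0 \<in> S2" "\<And>x. x \<in> S2 \<Longrightarrow> x \<noteq> b0 \<Longrightarrow> u2 (a1,x) < u2 (a1,b0)"
    using br2[OF a1(1)] by blast
  have b02: "b0 \<noteq> b2" using nosink[of a1 b2] a1 b2 b0 by force
  obtain a2 where a2: "a2 \<in> S1" "\<And>x. x \<in> S1 \<Longrightarrow> x \<noteq> a2 \<Longrightarrow> u1 (x,b0) < u1 (a2,b0)"
    using br1[OF b0(1)] by blast
  have a21: "a2 \<noteq> a1" using nosink[of a1 b0] a1 b0 a2 by force
  have a20: "a2 \<noteq> a0"
  proof
    assume e: "a2 = a0"
    show False using no4[of a0 a1 b2 b0] a0 a1 a10 b2 b0 b02 a2 e by auto
  qed
  obtain b1 where b1: "b1 \<in> S2" "\<And>x. x \<in> S2 \<Longrightarrow> x \<noteq> b1 \<Longrightarrow> u2 (a2,x) < u2 (a2,b1)"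
    using br2[OF a2(1)] by blast
  have b10: "b1 \<noteq> b0" using nosink[of a2 b0] a2 b0 b1 by force
  have b12: "b1 \<noteq> b2"
  proof
    assume e: "b1 = b2"
    show False using no4[of a2 a1 b2 b0] a1 a2 a21 b2 b0 b02 b1 e by auto
  qed
  have S1: "S1 = {a0,a1,a2}"
    using card_subset_eq[OF fin1, of "{a0,a1,a2}"] a0 a1 a2 a10 a20 a21 c1 by auto
  have S2: "S2 = {b0,b1,b2}"
    using card_subset_eq[OF fin2, of "{b0,b1,b2}"] b0 b1 b2 b10 b02 b12 c2 by auto
  obtain a where a: "a \<in> S1" "\<And>x. x \<in> S1 \<Longrightarrow> x \<noteq> a \<Longrightarrow> u1 (x,b1) < u1 (a,b1)"
    using br1[OF b1(1)] by blast
  have "a \<noteq> a2" using nosink[of a2 b1] a2 b1 a by force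
  moreover have "a \<noteq> a1"
  proof
    assume e: "a = a1"
    show False using no4[of a1 a2 b0 b1] a1 a2 a21 b0 b1 b10 a e by auto
  qed
  ultimately have ea: "a = a0" using a S1 by auto
  note facts = a0 a1 a2 b0 b1 b2 a[unfolded ea] a10 a20 a21 b10 b02 b12
  have e1: "u1 (a2,b2) < u1 (a0,b2)"
  proof (rule ccontr)
    assume "\<not> ?thesis"
    hence "u1 (a0,b2) < u1 (a2,b2)" using strict1[of a2 a0 b2] facts by force
    then show False using no4[of a0 a2 b2 b1] facts by auto
  qed
  have e2: "u1 (a0,b0) < u1 (a1,b0)"
  proof (rule ccontr)
    assume "\<not> ?thesis"
    hence "u1 (a1,b0) < u1 (a0,b0)" using strict1[of a0 a1 b0] facts by force
    then show False using no4[of a1 a0 b0 b2] facts by auto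
  qed
  have e3: "u1 (a1,b1) < u1 (a2,b1)"
  proof (rule ccontr)
    assume "\<not> ?thesis"
    hence "u1 (a2,b1) < u1 (a1,b1)" using strict1[of a1 a2 b1] facts by force
    then show False using no4[of a2 a1 b1 b0] facts by auto
  qed
  have e4: "u2 (a0,b0) < u2 (a0,b1)"
  proof (rule ccontr)
    assume "\<not> ?thesis"
    hence "u2 (a0,b1) < u2 (a0,b0)" using strict2[of a0 b0 b1] facts by force
    then show False using no4[of a0 a2 b0 b1] facts by auto
  qed
  have e5: "u2 (a1,b1) < u2 (a1,b2)"
  proof (rule ccontr)
    assume "\<not> ?thesis"
    hence "u2 (a1,b2) < u2 (a1,b1)" using strict2[of a1 b1 b2] facts by force
    then show False using no4[of a1 a0 b1 b2] facts by auto
  qed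
  have e6: "u2 (a2,b2) < u2 (a2,b0)"
  proof (rule ccontr)
    assume "\<not> ?thesis"
    hence "u2 (a2,b0) < u2 (a2,b2)" using strict2[of a2 b2 b0] facts by force
    then show False using no4[of a2 a1 b2 b0] facts by auto
  qed
  show ?thesis
    apply (rule exI[of _ a0], rule exI[of _ a1], rule exI[of _ a2])
    apply (rule exI[of _ b0], rule exI[of _ b1], rule exI[of _ b2])
    using S1 S2 facts e1 e2 e3 e4 e5 e6 by auto
qed

end


lemma sv: "shapley_u1 (0,0) = 0" "shapley_u1 (0,1) = 2" "shapley_u1 (0,2) = 1"
  "shapley_u1 (1,0) = 1" "shapley_u1 (1,1) = 0" "shapley_u1 (1,2) = 2"
  "shapley_u1 (2,0) = 2" "shapley_u1 (2,1) = 1" "shapley_u1 (2,2) = 0"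
  "shapley_u2 (0,0) = 0" "shapley_u2 (0,1) = 1" "shapley_u2 (0,2) = 2"
  "shapley_u2 (1,0) = 2" "shapley_u2 (1,1) = 0" "shapley_u2 (1,2) = 1"
  "shapley_u2 (2,0) = 1" "shapley_u2 (2,1) = 2" "shapley_u2 (2,2) = 0"
  by (simp_all add: shapley_u1_def shapley_u2_def numeral_2_eq_2)

lemma iso3:
  fixes u1 u2 :: "'a \<times> 'b \<Rightarrow> real"
  assumes S1: "S1 = {a0,a1,a2}" and S2: "S2 = {b0,b1,b2}" and d1: "distinct [a0,a1,a2]" and d2: "distinct [b0,b1,b2]"
   and F: "u1 (a0,b0) < u1 (a1,b0) \<and> u1 (a1,b0) < u1 (a2,b0) \<and> u1 (a0,b0) < u1 (a2,b0) \<and>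
     u1 (a1,b1) < u1 (a2,b1) \<and> u1 (a2,b1) < u1 (a0,b1) \<and> u1 (a1,b1) < u1 (a0,b1) \<and>
     u1 (a2,b2) < u1 (a0,b2) \<and> u1 (a0,b2) < u1 (a1,b2) \<and> u1 (a2,b2) < u1 (a1,b2) \<and>
     u2 (a0,b0) < u2 (a0,b1) \<and> u2 (a0,b1) < u2 (a0,b2) \<and> u2 (a0,b0) < u2 (a0,b2) \<and>
     u2 (a1,b1) < u2 (a1,b2) \<and> u2 (a1,b2) < u2 (a1,b0) \<and> u2 (a1,b1) < u2 (a1,b0) \<and>
     u2 (a2,b2) < u2 (a2,b0) \<and> u2 (a2,b0) < u2 (a2,b1) \<and> u2 (a2,b2) < u2 (a2,b1)"
  shows "digraph_iso (S1 \<times> S2) (pref_arc S1 S2 u1 u2) (shapley_S \<times> shapley_S) shapley_arc"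
proof -
  define r where "r x = (if x = a0 then 0 else if x = a1 then 1 else (2::nat))" for x
  define g where "g x = (if x = b0 then 0 else if x = b1 then 1 else (2::nat))" for x
  have r: "r a0 = 0" "r a1 = 1" "r a2 = 2" using d1 by (auto simp: r_def)
  have g: "g b0 = 0" "g b1 = 1" "g b2 = 2" using d2 by (auto simp: g_def)
  have br: "bij_betw r S1 shapley_S" using d1 r unfolding S1 shapley_S_def bij_betw_def by auto
  have bg: "bij_betw g S2 shapley_S" using d2 g unfolding S2 shapley_S_def bij_betw_def by auto
  have F': "u1 (a0,b0) \<le> u1 (a1,b0) \<and> u1 (a1,b0) \<le> u1 (a2,b0) \<and> u1 (a0,b0) \<le> u1 (a2,b0) \<and>
     u1 (a1,b1) \<le> u1 (a2,b1) \<and> u1 (a2,b1) \<le> u1 (a0,b1) \<and> u1 (a1,b1) \<le> u1 (a0,b1) \<and>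
     u1 (a2,b2) \<le> u1 (a0,b2) \<and> u1 (a0,b2) \<le> u1 (a1,b2) \<and> u1 (a2,b2) \<le> u1 (a1,b2) \<and>
     u2 (a0,b0) \<le> u2 (a0,b1) \<and> u2 (a0,b1) \<le> u2 (a0,b2) \<and> u2 (a0,b0) \<le> u2 (a0,b2) \<and>
     u2 (a1,b1) \<le> u2 (a1,b2) \<and> u2 (a1,b2) \<le> u2 (a1,b0) \<and> u2 (a1,b1) \<le> u2 (a1,b0) \<and>
     u2 (a2,b2) \<le> u2 (a2,b0) \<and> u2 (a2,b0) \<le> u2 (a2,b1) \<and> u2 (a2,b2) \<le> u2 (a2,b1)"
   "\<not> u1 (a0,b0) \<ge> u1 (a1,b0) \<and> \<not> u1 (a1,b0) \<ge> u1 (a2,b0) \<and> \<not> u1 (a0,b0) \<ge> u1 (a2,b0) \<and>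
     \<not> u1 (a1,b1) \<ge> u1 (a2,b1) \<and> \<not> u1 (a2,b1) \<ge> u1 (a0,b1) \<and> \<not> u1 (a1,b1) \<ge> u1 (a0,b1) \<and>
     \<not> u1 (a2,b2) \<ge> u1 (a0,b2) \<and> \<not> u1 (a0,b2) \<ge> u1 (a1,b2) \<and> \<not> u1 (a2,b2) \<ge> u1 (a1,b2) \<and>
     \<not> u2 (a0,b0) \<ge> u2 (a0,b1) \<and> \<not> u2 (a0,b1) \<ge> u2 (a0,b2) \<and> \<not> u2 (a0,b0) \<ge> u2 (a0,b2) \<and>
     \<not> u2 (a1,b1) \<ge> u2 (a1,b2) \<and> \<not> u2 (a1,b2) \<ge> u2 (a1,b0) \<and> \<not> u2 (a1,b1) \<ge> u2 (a1,b0) \<and>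
     \<not> u2 (a2,b2) \<ge> u2 (a2,b0) \<and> \<not> u2 (a2,b0) \<ge> u2 (a2,b1) \<and> \<not> u2 (a2,b2) \<ge> u2 (a2,b1)"
    using F by auto
  have ir: "inj_on r S1" using br by (simp add: bij_betw_def)
  have ig: "inj_on g S2" using bg by (simp add: bij_betw_def)
  have L1: "u1 (x,y) \<le> u1 (x',y) \<longleftrightarrow> shapley_u1 (r x, g y) \<le> shapley_u1 (r x', g y)"
    if "x \<in> S1" "x' \<in> S1" "y \<in> S2" "x \<noteq> x'" for x x' y
  proof -
    have "x = a0 \<or> x = a1 \<or> x = a2" "x' = a0 \<or> x' = a1 \<or> x' = a2" "y = b0 \<or> y = b1 \<or> y = b2"
      using that unfolding S1 S2 by auto
    then show ?thesis using that(4) by (elim disjE; simp add: F' r g sv sv[unfolded One_nat_def])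
  qed
  have L2: "u2 (x,y) \<le> u2 (x,y') \<longleftrightarrow> shapley_u2 (r x, g y) \<le> shapley_u2 (r x, g y')"
    if "x \<in> S1" "y \<in> S2" "y' \<in> S2" "y \<noteq> y'" for x y y'
  proof -
    have "x = a0 \<or> x = a1 \<or> x = a2" "y' = b0 \<or> y' = b1 \<or> y' = b2" "y = b0 \<or> y = b1 \<or> y = b2"
      using that unfolding S1 S2 by auto
    then show ?thesis using that(4) by (elim disjE; simp add: F' r g sv sv[unfolded One_nat_def])
  qed
  have arcs: "\<forall>p\<in>S1 \<times> S2. \<forall>q\<in>S1 \<times> S2. pref_arc S1 S2 u1 u2 p q \<longleftrightarrow> shapley_arc (map_prod r g p) (map_prod r g q)"
  proof (intro ballI)
    fix p q assume p: "p \<in> S1 \<times> S2" and q: "q \<in> S1 \<times> S2"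
    obtain x y x' y' where pq: "p = (x,y)" "q = (x',y')" by fastforce
    have m: "x \<in> S1" "y \<in> S2" "x' \<in> S1" "y' \<in> S2" using p q pq by auto
    have rS: "r x \<in> shapley_S" "r x' \<in> shapley_S" "g y \<in> shapley_S" "g y' \<in> shapley_S"
      using m br bg by (auto simp: bij_betw_def)
    have ex: "r x = r x' \<longleftrightarrow> x = x'" using ir m by (auto dest: inj_onD)
    have ey: "g y = g y' \<longleftrightarrow> y = y'" using ig m by (auto dest: inj_onD)
    show "pref_arc S1 S2 u1 u2 p q \<longleftrightarrow> shapley_arc (map_prod r g p) (map_prod r g q)"
      unfolding pq shapley_arc_def pref_arc_def comparable1_def comparable2_def
      using m rS ex ey L1[of x x' y] L2[of x y y'] by auto
  qed
  show ?thesis unfolding digraph_iso_def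
    using bij_betw_map_prod[OF br bg] arcs by blast
qed

theorem mainTheorem1:
  fixes S1 :: "'a set" and S2 :: "'b set" and u1 u2 :: "'a \<times> 'b \<Rightarrow> real"
  assumes "two_player_game S1 S2 u1 u2"
    and "strict_game S1 S2 u1 u2"
    and "\<not> has_sink (S1 \<times> S2) (pref_arc S1 S2 u1 u2)"
    and "\<not> has_4_cycle (S1 \<times> S2) (pref_arc S1 S2 u1 u2)"
  shows "card S1 \<ge> 3 \<and> card S2 \<ge> 3 \<and>
    (card S1 = 3 \<and> card S2 = 3 \<longrightarrow>
       digraph_iso (S1 \<times> S2) (pref_arc S1 S2 u1 u2) (shapley_S \<times> shapley_S) shapley_arc)"
proof -
  have g: "finite S1" "finite S2" "S1 \<noteq> {}" "S2 \<noteq> {}" using assms(1) by (auto simp: two_player_game_def)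
  have s1: "u1 (a,c) \<noteq> u1 (a',c)" if "a \<in> S1" "a' \<in> S1" "a \<noteq> a'" "c \<in> S2" for a a' c
  proof -
    have "comparable1 (a,c) (a',c) \<longrightarrow> u1 (a,c) \<noteq> u1 (a',c)"
      using assms(2) that unfolding strict_game_def by blast
    then show ?thesis using that by (simp add: comparable1_def)
  qed
  have s2: "u2 (a,c) \<noteq> u2 (a,c')" if "a \<in> S1" "c \<in> S2" "c' \<in> S2" "c \<noteq> c'" for a c c'
  proof -
    have "comparable2 (a,c) (a,c') \<longrightarrow> u2 (a,c) \<noteq> u2 (a,c')"
      using assms(2) that unfolding strict_game_def by blast
    then show ?thesis using that by (simp add: comparable2_def)
  qed
  have ns: "(\<exists>a'\<in>S1. a' \<noteq> a \<and> u1 (a,c) < u1 (a',c)) \<or> (\<exists>c'\<in>S2. c' \<noteq> c \<and> u2 (a,c) < u2 (a,c'))"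
    if "a \<in> S1" "c \<in> S2" for a c
  proof -
    have "\<exists>q\<in>S1 \<times> S2. pref_arc S1 S2 u1 u2 (a,c) q"
      using assms(3) that unfolding has_sink_def by blast
    then obtain a' c' where q: "a' \<in> S1" "c' \<in> S2" "pref_arc S1 S2 u1 u2 (a,c) (a',c')" by blast
    then have "(a \<noteq> a' \<and> c = c' \<and> u1 (a,c) \<le> u1 (a',c)) \<or> (a = a' \<and> c \<noteq> c' \<and> u2 (a,c) \<le> u2 (a,c'))"
      unfolding pref_arc_def comparable1_def comparable2_def by auto
    then show ?thesis
    proof
      assume h: "a \<noteq> a' \<and> c = c' \<and> u1 (a,c) \<le> u1 (a',c)"
      then have "u1 (a,c) < u1 (a',c)" using s1[of a a' c] that q by (auto simp: order_le_less)
      then show ?thesis using h q by auto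
    next
      assume h: "a = a' \<and> c \<noteq> c' \<and> u2 (a,c) \<le> u2 (a,c')"
      then have "u2 (a,c) < u2 (a,c')" using s2[of a c c'] that q by (auto simp: order_le_less)
      then show ?thesis using h q by auto
    qed
  qed
  have n4: False if "a \<in> S1" "a' \<in> S1" "a \<noteq> a'" "c \<in> S2" "c' \<in> S2" "c \<noteq> c'"
        "u1 (a,c) < u1 (a',c)" "u2 (a',c) < u2 (a',c')" "u1 (a',c') < u1 (a,c')" "u2 (a,c') < u2 (a,c)"
      for a a' c c'
  proof -
    have d: "distinct [(a,c), (a',c), (a',c'), (a,c')]" using that by auto
    have e: "pref_arc S1 S2 u1 u2 (a,c) (a',c)" "pref_arc S1 S2 u1 u2 (a',c) (a',c')"
      "pref_arc S1 S2 u1 u2 (a',c') (a,c')" "pref_arc S1 S2 u1 u2 (a,c') (a,c)"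
      using that unfolding pref_arc_def comparable1_def comparable2_def by auto
    have "has_4_cycle (S1 \<times> S2) (pref_arc S1 S2 u1 u2)"
      unfolding has_4_cycle_def using d e that by blast
    with assms(4) show False by blast
  qed
  interpret A: G S1 S2 u1 u2
  proof (unfold_locales)
    show "finite S1" "finite S2" "S1 \<noteq> {}" "S2 \<noteq> {}" by (fact g)+
  qed (fact s1 s2 ns n4)+
  interpret B: G S2 S1 "\<lambda>(c,a). u2 (a,c)" "\<lambda>(c,a). u1 (a,c)"
  proof (unfold_locales)
    show "finite S2" "finite S1" "S2 \<noteq> {}" "S1 \<noteq> {}" by (fact g)+
  next
    fix c c' a assume "c \<in> S2" "c' \<in> S2" "c \<noteq> c'" "a \<in> S1"
    then show "(case (c, a) of (c, a) \<Rightarrow> u2 (a, c)) \<noteq> (case (c', a) of (c, a) \<Rightarrow> u2 (a, c))"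
      using s2[of a c c'] by simp
  next
    fix c a a' assume "c \<in> S2" "a \<in> S1" "a' \<in> S1" "a \<noteq> a'"
    then show "(case (c, a) of (c, a) \<Rightarrow> u1 (a, c)) \<noteq> (case (c, a') of (c, a) \<Rightarrow> u1 (a, c))"
      using s1[of a a' c] by simp
  next
    fix c a assume "c \<in> S2" "a \<in> S1"
    then show "(\<exists>a'\<in>S2. a' \<noteq> c \<and> (case (c, a) of (c, a) \<Rightarrow> u2 (a, c)) < (case (a', a) of (c, a) \<Rightarrow> u2 (a, c))) \<or>
          (\<exists>c'\<in>S1. c' \<noteq> a \<and> (case (c, a) of (c, a) \<Rightarrow> u1 (a, c)) < (case (c, c') of (c, a) \<Rightarrow> u1 (a, c)))"
      using ns[of a c] by auto
  next
    fix c c' a a'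
    assume "c \<in> S2" "c' \<in> S2" "c \<noteq> c'" "a \<in> S1" "a' \<in> S1" "a \<noteq> a'"
      "(case (c, a) of (c, a) \<Rightarrow> u2 (a, c)) < (case (c', a) of (c, a) \<Rightarrow> u2 (a, c))"
      "(case (c', a) of (c, a) \<Rightarrow> u1 (a, c)) < (case (c', a') of (c, a) \<Rightarrow> u1 (a, c))"
      "(case (c', a') of (c, a) \<Rightarrow> u2 (a, c)) < (case (c, a') of (c, a) \<Rightarrow> u2 (a, c))"
      "(case (c, a') of (c, a) \<Rightarrow> u1 (a, c)) < (case (c, a) of (c, a) \<Rightarrow> u1 (a, c))"
    then show False using n4[of a' a c c'] by auto
  qed
  have "card S1 \<ge> 3" by (rule A.card1_ge3)
  moreover have "card S2 \<ge> 3" by (rule B.card1_ge3)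
  moreover have "card S1 = 3 \<and> card S2 = 3 \<longrightarrow>
       digraph_iso (S1 \<times> S2) (pref_arc S1 S2 u1 u2) (shapley_S \<times> shapley_S) shapley_arc"
  proof
    assume "card S1 = 3 \<and> card S2 = 3"
    then obtain a0 a1 a2 b0 b1 b2 where X: "S1 = {a0,a1,a2}" "S2 = {b0,b1,b2}" "distinct [a0,a1,a2]" "distinct [b0,b1,b2]"
      and F: "u1 (a0,b0) < u1 (a1,b0) \<and> u1 (a1,b0) < u1 (a2,b0) \<and> u1 (a0,b0) < u1 (a2,b0) \<and>
     u1 (a1,b1) < u1 (a2,b1) \<and> u1 (a2,b1) < u1 (a0,b1) \<and> u1 (a1,b1) < u1 (a0,b1) \<and>
     u1 (a2,b2) < u1 (a0,b2) \<and> u1 (a0,b2) < u1 (a1,b2) \<and> u1 (a2,b2) < u1 (a1,b2) \<and>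
     u2 (a0,b0) < u2 (a0,b1) \<and> u2 (a0,b1) < u2 (a0,b2) \<and> u2 (a0,b0) < u2 (a0,b2) \<and>
     u2 (a1,b1) < u2 (a1,b2) \<and> u2 (a1,b2) < u2 (a1,b0) \<and> u2 (a1,b1) < u2 (a1,b0) \<and>
     u2 (a2,b2) < u2 (a2,b0) \<and> u2 (a2,b0) < u2 (a2,b1) \<and> u2 (a2,b2) < u2 (a2,b1)"
      using A.three by blast
    show "digraph_iso (S1 \<times> S2) (pref_arc S1 S2 u1 u2) (shapley_S \<times> shapley_S) shapley_arc"
      by (rule iso3[OF X F])
  qed
  ultimately show ?thesis by blast
qed

end
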